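(* Define $\theta:\mathbb R\to\mathbb R$ by $\theta(x)=e^{-1/|x|}$ for $x\neq 0$ and $\theta(0)=0$. Let $q(x)=x+x^2$ and $p(x)=q(x)+\theta(x)=x+x^2+\theta(x)$. These are $C^\infty$ functions with $p(0)=q(0)=0$ and $p'(0)=q'(0)=1$, hence invertible near $0$; let $f=p^{-1}$ and $g=q^{-1}$ be their local inverses near $0$ (so $f,g$ are $C^\infty$, $f(0)=g(0)=0$, $f'(0)=g'(0)=1$, and their graphs do not coincide). Then $$\lim_{x\to 0^+}\frac{x - f^{-1}(g(x))}{g^{-1}(x)-f^{-1}(x)} = \lim_{x\to 0^+}\frac{x-p(g(x))}{q(x)-p(x)} = e^{-1}\neq 1.$$
   Context: Geometrically, with points $B=(x,g(x))$, $C=(f^{-1}(g(x)),g(x))$, $D=(g^{-1}(x),x)$, $E=(f^{-1}(x),x)$, the quotient above is the ratio of the (signed) lengths $|BC|/|ED|$; the result shows this ratio need not tend to $1$ when $f,g$ are merely $C^\infty$ rather than analytic. *)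

theory Defs
  imports "HOL-Analysis.Analysis"
begin

definition theta :: "real \<Rightarrow> real" where
  "theta x = (if x = 0 then 0 else exp (- 1 / \<bar>x\<bar>))"

definition qfun :: "real \<Rightarrow> real" where
  "qfun x = x + x\<^sup>2"

definition pfun :: "real \<Rightarrow> real" where
  "pfun x = qfun x + theta x"

definition local_inverse_at0 :: "(real \<Rightarrow> real) \<Rightarrow> (real \<Rightarrow> real) \<Rightarrow> bool" where
  "local_inverse_at0 h F \<longleftrightarrow> h 0 = 0 \<and> isCont h 0 \<and>
     (\<exists>e>0. \<forall>y. \<bar>y\<bar> < e \<longrightarrow> F (h y) = y \<and> h (F y) = y)"

end

theory Submission
  imports Defs
begin

lemma key:
  fixes x y :: real
  assumes x: "x > 0" and yx: "y + y^2 = x" and y1: "\<bar>y\<bar> < 1"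
  shows "(x - pfun y) / (qfun x - pfun x) = exp (- 1 / (1 + y))"
proof -
  have "y \<noteq> 0" using x yx by auto
  have "1 + y > 0" using y1 by auto
  have "y * (1 + y) = x" using yx by (simp add: power2_eq_square algebra_simps)
  hence "y > 0" using x \<open>1 + y > 0\<close> by (metis zero_less_mult_pos2)
  have py: "pfun y = x + exp (-1 / y)"
    using \<open>y > 0\<close> yx by (simp add: pfun_def qfun_def theta_def)
  have px: "qfun x - pfun x = - exp (-1 / x)"
    using x by (simp add: pfun_def qfun_def theta_def)
  have "(x - pfun y) / (qfun x - pfun x) = exp (-1/y) / exp (-1/x)"
    using py px by simp
  also have "\<dots> = exp (-1/y - (-1/x))" by (simp only: exp_diff)
  also have "-1/y - (-1/x) = - 1 / (1 + y)"
  proof -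
    have "-1/y - (-1/x) = -1/y + 1/(y*(1+y))" using \<open>y * (1 + y) = x\<close> by simp
    also have "\<dots> = - 1 / (1 + y)"
      using \<open>y > 0\<close> \<open>1 + y > 0\<close> by (simp add: divide_simps)
    finally show ?thesis .
  qed
  finally show ?thesis .
qed

theorem mainTheorem2:
  fixes f g :: "real \<Rightarrow> real"
  assumes "local_inverse_at0 f pfun" and "local_inverse_at0 g qfun"
  shows "((\<lambda>x. (x - pfun (g x)) / (qfun x - pfun x)) \<longlongrightarrow> exp (- 1)) (at_right 0) \<and>
         exp (- 1) \<noteq> (1::real)"
proof
  from assms(2) obtain e where e: "e > 0" and inv: "\<And>y. \<bar>y\<bar> < e \<Longrightarrow> qfun (g y) = y"
    unfolding local_inverse_at0_def by blast
  have g0: "g 0 = 0" "isCont g 0" using assms(2) unfolding local_inverse_at0_def by auto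
  have gt: "(g \<longlongrightarrow> 0) (at_right 0)"
    using g0 by (metis continuous_at filterlim_at_split)
  have ev1: "\<forall>\<^sub>F x in at_right 0. \<bar>g x\<bar> < 1"
    using order_tendstoD(2)[OF tendsto_rabs[OF gt], of 1] by simp
  have ev2: "\<forall>\<^sub>F x in at_right (0::real). 0 < x \<and> x < e"
    using e by (simp add: eventually_at_right_field) (metis linorder_not_le order_less_le_trans)
  have ev: "\<forall>\<^sub>F x in at_right 0. exp (- 1 / (1 + g x)) = (x - pfun (g x)) / (qfun x - pfun x)"
    using ev1 ev2
  proof eventually_elim
    case (elim x)
    then have "qfun (g x) = x" using inv by auto
    then have "g x + (g x)^2 = x" by (simp add: qfun_def)
    then show ?case using key elim by auto
  qed
  have "((\<lambda>x. exp (- 1 / (1 + g x))) \<longlongrightarrow> exp (- 1 / (1 + 0))) (at_right 0)"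
    by (intro tendsto_intros gt) auto
  then show "((\<lambda>x. (x - pfun (g x)) / (qfun x - pfun x)) \<longlongrightarrow> exp (- 1)) (at_right 0)"
    using ev by (simp add: tendsto_cong)
  show "exp (- 1) \<noteq> (1::real)" by simp
qed

end
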